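(* Let $G$ be a $c$-edge-colored multigraph (without loops) with $n$ vertices such that every vertex is incident to at least two edges of different colors. If $\delta_{dym}(x)\ge (n+1)/2$ for every $x\in V(G)$, and at least one vertex is incident to at least three edges of pairwise different colors, then $G$ has a properly colored hamiltonian cycle.
   Context: A $c$-edge-colored multigraph is a finite multigraph without loops (parallel edges allowed) together with a map $\phi:E(G)\to\{1,\ldots,c\}$. For $u,v\in V(G)$, $E_{uv}$ is the set of edges with end vertices $u$ and $v$. Here $\delta_{dym}(x)$ is the number of vertices $y$ such that $E_{xy}$ contains two edges of different colors. A properly colored (PC) hamiltonian cycle is a cyclic sequence $(x_1,f_1,x_2,f_2,\ldots,x_n,f_n,x_1)$ containing every vertex exactly once, with $f_i\in E_{x_ix_{i+1}}$ (indices mod $n$), such that any two consecutive edges, including $f_n$ and $f_1$, have different colors. *)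

theory Defs
  imports Main
begin

text \<open>A c-edge-colored multigraph: finite vertex set V, finite edge set E (edges are
 abstract objects, so parallel edges are allowed), an endpoint map ends with
 ends e a two-element subset of V (no loops), and a colouring phi into {1..c}.\<close>

definition colored_multigraph ::
  "'a set \<Rightarrow> 'e set \<Rightarrow> ('e \<Rightarrow> 'a set) \<Rightarrow> ('e \<Rightarrow> nat) \<Rightarrow> nat \<Rightarrow> bool" where
  "colored_multigraph V E ends phi c \<longleftrightarrow>
     finite V \<and> finite E \<and>
     (\<forall>e\<in>E. ends e \<subseteq> V \<and> card (ends e) = 2) \<and>
     (\<forall>e\<in>E. phi e \<in> {1..c})"

definition edges_between :: "'e set \<Rightarrow> ('e \<Rightarrow> 'a set) \<Rightarrow> 'a \<Rightarrow> 'a \<Rightarrow> 'e set" where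
  "edges_between E ends x y = {e \<in> E. ends e = {x, y}}"

definition delta_dym ::
  "'a set \<Rightarrow> 'e set \<Rightarrow> ('e \<Rightarrow> 'a set) \<Rightarrow> ('e \<Rightarrow> nat) \<Rightarrow> 'a \<Rightarrow> nat" where
  "delta_dym V E ends phi x =
     card {y \<in> V. \<exists>e\<in>edges_between E ends x y. \<exists>f\<in>edges_between E ends x y. phi e \<noteq> phi f}"

text \<open>A PC hamiltonian cycle (x_1,f_1,...,x_n,f_n,x_1), given by the vertex list xs and
 the edge list fs, indices taken mod n.\<close>
definition pc_hamiltonian_cycle ::
  "'a set \<Rightarrow> 'e set \<Rightarrow> ('e \<Rightarrow> 'a set) \<Rightarrow> ('e \<Rightarrow> nat) \<Rightarrow> 'a list \<Rightarrow> 'e list \<Rightarrow> bool" where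
  "pc_hamiltonian_cycle V E ends phi xs fs \<longleftrightarrow>
     (let n = length xs in
       distinct xs \<and> set xs = V \<and> length fs = n \<and>
       (\<forall>i<n. fs ! i \<in> edges_between E ends (xs ! i) (xs ! ((i + 1) mod n))) \<and>
       (\<forall>i<n. phi (fs ! i) \<noteq> phi (fs ! ((i + 1) mod n))))"

definition has_pc_hamiltonian_cycle ::
  "'a set \<Rightarrow> 'e set \<Rightarrow> ('e \<Rightarrow> 'a set) \<Rightarrow> ('e \<Rightarrow> nat) \<Rightarrow> bool" where
  "has_pc_hamiltonian_cycle V E ends phi \<longleftrightarrow>
     (\<exists>xs fs. pc_hamiltonian_cycle V E ends phi xs fs)"

end

theory Submission
  imports Defs
begin

fun dpath :: "('a \<Rightarrow> 'a \<Rightarrow> bool) \<Rightarrow> 'a list \<Rightarrow> bool" where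
  "dpath R (x # y # xs) = (R x y \<and> dpath R (y # xs))"
| "dpath R _ = True"

fun adj :: "'a list \<Rightarrow> 'a \<Rightarrow> 'a \<Rightarrow> bool" where
  "adj (x # y # xs) a b = ((x = a \<and> y = b) \<or> adj (y # xs) a b)"
| "adj _ a b = False"

definition cyc :: "('a \<Rightarrow> 'a \<Rightarrow> bool) \<Rightarrow> 'a list \<Rightarrow> bool" where
  "cyc R Q \<longleftrightarrow> Q \<noteq> [] \<and> dpath R Q \<and> R (last Q) (hd Q)"

lemma dpath_Cons: "dpath R (x # xs) \<longleftrightarrow> (xs \<noteq> [] \<longrightarrow> R x (hd xs)) \<and> dpath R xs"
  by (cases xs) auto

lemma dpath_append:
  "dpath R (xs @ ys) \<longleftrightarrow> dpath R xs \<and> dpath R ys \<and> (xs \<noteq> [] \<and> ys \<noteq> [] \<longrightarrow> R (last xs) (hd ys))"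
  by (induction xs) (auto simp: dpath_Cons)

lemma dpath_rev: "dpath R (rev xs) \<longleftrightarrow> dpath (\<lambda>a b. R b a) xs"
  by (induction xs) (auto simp: dpath_append dpath_Cons hd_rev last_rev)

lemma dpath_rev_sym: "\<forall>a b. R a b \<longrightarrow> R b a \<Longrightarrow> dpath R (rev xs) \<longleftrightarrow> dpath R xs"
proof -
  assume s: "\<forall>a b. R a b \<longrightarrow> R b a"
  have "(\<lambda>a b. R b a) = R" using s by (auto intro!: ext)
  then show ?thesis by (simp add: dpath_rev)
qed

lemma dpath_mono: "dpath R xs \<Longrightarrow> (\<And>a b. R a b \<Longrightarrow> R' a b) \<Longrightarrow> dpath R' xs"
  by (induction R xs rule: dpath.induct) auto

lemma all_nat_split: "(\<forall>i::nat. P i) = (P 0 \<and> (\<forall>j. P (Suc j)))"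
  by (metis old.nat.exhaust)

lemma dpath_nth: "dpath R xs \<longleftrightarrow> (\<forall>i. Suc i < length xs \<longrightarrow> R (xs ! i) (xs ! Suc i))"
proof (induction R xs rule: dpath.induct)
  case (1 R x y xs)
  have "(\<forall>i. Suc i < length (x # y # xs) \<longrightarrow> R ((x # y # xs) ! i) ((x # y # xs) ! Suc i)) \<longleftrightarrow>
        R x y \<and> (\<forall>i. Suc i < length (y # xs) \<longrightarrow> R ((y # xs) ! i) ((y # xs) ! Suc i))"
    by (subst all_nat_split) simp
  then show ?case using 1 by simp
qed auto

lemma adj_Cons: "adj (x # xs) a b \<longleftrightarrow> (xs \<noteq> [] \<and> x = a \<and> hd xs = b) \<or> adj xs a b"
  by (cases xs) auto

lemma adj_append:
  "adj (xs @ ys) a b \<longleftrightarrow> adj xs a b \<or> adj ys a b \<or> (xs \<noteq> [] \<and> ys \<noteq> [] \<and> last xs = a \<and> hd ys = b)"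
  by (induction xs) (auto simp: adj_Cons)

lemma adj_rev: "adj (rev xs) a b \<longleftrightarrow> adj xs b a"
  by (induction xs) (auto simp: adj_append adj_Cons hd_rev last_rev)

lemma adj_split: "adj (ys @ a # b # zs) a b"
  by (simp add: adj_append)

lemma adj_splitD: "adj xs a b \<Longrightarrow> \<exists>ys zs. xs = ys @ a # b # zs"
proof (induction xs a b rule: adj.induct)
  case (1 x y xs a b)
  then show ?case
  proof (cases "x = a \<and> y = b")
    case True then show ?thesis by (metis append_Nil)
  next
    case False
    then have "adj (y # xs) a b" using 1(2) by auto
    then obtain ys zs where "y # xs = ys @ a # b # zs" using 1 False by blast
    then show ?thesis by (metis append_Cons)
  qed
qed auto

lemma adj_nth: "adj xs a b \<longleftrightarrow> (\<exists>i. Suc i < length xs \<and> xs ! i = a \<and> xs ! Suc i = b)"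
proof
  assume "adj xs a b"
  then obtain ys zs where e: "xs = ys @ a # b # zs" by (meson adj_splitD)
  have "Suc (length ys) < length xs \<and> xs ! length ys = a \<and> xs ! Suc (length ys) = b"
    unfolding e by (simp add: nth_append)
  then show "\<exists>i. Suc i < length xs \<and> xs ! i = a \<and> xs ! Suc i = b" by blast
next
  assume "\<exists>i. Suc i < length xs \<and> xs ! i = a \<and> xs ! Suc i = b"
  then obtain i where i: "Suc i < length xs" "xs ! i = a" "xs ! Suc i = b" by blast
  have d1: "drop i xs = xs ! i # drop (Suc i) xs" using i(1) by (simp add: Cons_nth_drop_Suc)
  have d2: "drop (Suc i) xs = xs ! Suc i # drop (Suc (Suc i)) xs" using i(1) by (simp add: Cons_nth_drop_Suc)
  have "xs = take i xs @ drop i xs" by simp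
  also have "\<dots> = take i xs @ a # b # drop (Suc (Suc i)) xs" by (simp only: d1 d2 i)
  finally show "adj xs a b" by (metis adj_split)
qed

lemma dpath_adj: "dpath R xs \<Longrightarrow> adj xs a b \<Longrightarrow> R a b"
  by (auto simp: dpath_nth adj_nth)

lemma adj_set: "adj xs a b \<Longrightarrow> a \<in> set xs \<and> b \<in> set xs"
  by (auto simp: adj_nth)

lemma cyc_rot: "cyc R (ys @ c # zs) \<Longrightarrow> cyc R (c # zs @ ys)"
  unfolding cyc_def
  by (cases "ys = []"; cases "zs = []") (auto simp: dpath_append dpath_Cons)

lemma cyc_rev_tail: "\<forall>a b. R a b \<longrightarrow> R b a \<Longrightarrow> cyc R (c # W) \<Longrightarrow> cyc R (c # rev W)"
  unfolding cyc_def
  by (cases "W = []") (auto simp: dpath_Cons dpath_rev_sym hd_rev last_rev)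

lemma cyc_rotate: "cyc R Q \<Longrightarrow> cyc R (rotate k Q)"
proof -
  assume c: "cyc R Q"
  then have ne: "Q \<noteq> []" by (simp add: cyc_def)
  define m where "m = k mod length Q"
  have m: "m < length Q" using ne m_def by simp
  have r: "rotate k Q = drop m Q @ take m Q" using m_def by (simp add: rotate_drop_take)
  have d: "drop m Q = Q ! m # drop (Suc m) Q" using m by (simp add: Cons_nth_drop_Suc)
  have "Q = take m Q @ Q ! m # drop (Suc m) Q" using d by (metis append_take_drop_id)
  then have "cyc R (Q ! m # drop (Suc m) Q @ take m Q)" using c cyc_rot[of R "take m Q" "Q ! m" "drop (Suc m) Q"] by simp
  then show ?thesis using r d by simp
qed


lemma crossing:
  fixes P :: "'a list"
  assumes dist: "distinct P" and len: "length P = k" and k2: "k \<ge> 2"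
    and irr: "\<forall>x. \<not> R x x"
    and N1: "{y. R (hd P) y} \<subseteq> set P" and N2: "{y. R (last P) y} \<subseteq> set P"
    and deg: "card {y. R (hd P) y} + card {y. R (last P) y} \<ge> k + 1"
  shows "\<exists>i. i \<noteq> j \<and> i + 1 < k \<and> R (hd P) (P ! (i+1)) \<and> R (last P) (P ! i)"
proof -
  define A where "A = {i. i + 1 < k \<and> R (hd P) (P ! (i+1))}"
  define B where "B = {i. i + 1 < k \<and> R (last P) (P ! i)}"
  have ne: "P \<noteq> []" using len k2 by auto
  have hd0: "hd P = P ! 0" using ne by (simp add: hd_conv_nth)
  have lastk: "last P = P ! (k - 1)" using ne len by (simp add: last_conv_nth)
  have imA: "{y. R (hd P) y} = (\<lambda>i. P ! (i+1)) ` A"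
  proof
    show "{y. R (hd P) y} \<subseteq> (\<lambda>i. P ! (i+1)) ` A"
    proof
      fix y assume y: "y \<in> {y. R (hd P) y}"
      then have "y \<in> set P" using N1 by blast
      then obtain m where m: "m < k" "P ! m = y" using len by (auto simp: in_set_conv_nth)
      have "m \<noteq> 0"
      proof
        assume "m = 0"
        then have "y = hd P" using m hd0 by simp
        then show False using y irr by simp
      qed
      then obtain i where "m = Suc i" by (cases m) auto
      then show "y \<in> (\<lambda>i. P ! (i+1)) ` A" using m y A_def by auto
    qed
  qed (auto simp: A_def)
  have injA: "inj_on (\<lambda>i. P ! (i+1)) A"
    using dist len by (auto simp: inj_on_def A_def nth_eq_iff_index_eq)
  have cA: "card A = card {y. R (hd P) y}" using imA injA by (simp add: card_image)
  have imB: "{y. R (last P) y} = (\<lambda>i. P ! i) ` B"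
  proof
    show "{y. R (last P) y} \<subseteq> (\<lambda>i. P ! i) ` B"
    proof
      fix y assume y: "y \<in> {y. R (last P) y}"
      then have "y \<in> set P" using N2 by blast
      then obtain m where m: "m < k" "P ! m = y" using len by (auto simp: in_set_conv_nth)
      have "m \<noteq> k - 1" using y m irr lastk by auto
      then have "m + 1 < k" using m by auto
      then show "y \<in> (\<lambda>i. P ! i) ` B" using m y B_def by auto
    qed
  qed (auto simp: B_def)
  have injB: "inj_on (\<lambda>i. P ! i) B"
    using dist len by (auto simp: inj_on_def B_def nth_eq_iff_index_eq)
  have cB: "card B = card {y. R (last P) y}" using imB injB by (simp add: card_image)
  have finA: "finite A" unfolding A_def by (rule finite_subset[of _ "{..<k}"]) auto
  have finB: "finite B" unfolding B_def by (rule finite_subset[of _ "{..<k}"]) auto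
  have "A \<union> B \<subseteq> {..<k-1}" by (auto simp: A_def B_def)
  then have "card (A \<union> B) \<le> k - 1" by (metis card_lessThan card_mono finite_lessThan)
  moreover have "card (A \<union> B) + card (A \<inter> B) = card A + card B"
    using finA finB card_Un_Int by metis
  ultimately have "card (A \<inter> B) \<ge> 2" using deg cA cB k2 by linarith
  have "A \<inter> B - {j} \<noteq> {}"
  proof
    assume "A \<inter> B - {j} = {}"
    then have "A \<inter> B \<subseteq> {j}" by blast
    then have "card (A \<inter> B) \<le> card {j}" by (intro card_mono) auto
    then show False using \<open>card (A \<inter> B) \<ge> 2\<close> by simp
  qed
  then obtain i where "i \<in> A \<inter> B - {j}" by blast
  then show ?thesis by (auto simp: A_def B_def)
qed

definition flip :: "nat \<Rightarrow> 'a list \<Rightarrow> 'a list" where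
  "flip i P = take (i+1) P @ rev (drop (i+1) P)"

lemma flip_set: "set (flip i P) = set P"
  unfolding flip_def by (metis append_take_drop_id set_append set_rev)

lemma flip_distinct: "distinct P \<Longrightarrow> distinct (flip i P)"
  unfolding flip_def by (metis append_take_drop_id distinct_append distinct_rev set_rev)

lemma flip_length: "length (flip i P) = length P"
  unfolding flip_def by simp

lemma flip_cyc:
  assumes sym: "\<forall>a b. R a b \<longrightarrow> R b a" and dp: "dpath R P" and i: "i + 1 < length P"
    and h: "R (hd P) (P ! (i+1))" and l: "R (last P) (P ! i)"
  shows "cyc R (flip i P)"
proof -
  let ?T = "take (i+1) P" and ?D = "drop (i+1) P"
  have PTD: "P = ?T @ ?D" by simp
  have Tne: "?T \<noteq> []" and Dne: "?D \<noteq> []" using i by auto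
  have dT: "dpath R ?T" and dD: "dpath R ?D" using dp PTD dpath_append by metis+
  have lT: "last ?T = P ! i" using i by (simp add: take_Suc_conv_app_nth)
  have hT: "hd ?T = hd P" using i by (cases P) auto
  have lD: "last ?D = last P" using i by simp
  have hD: "hd ?D = P ! (i+1)" using i by (simp add: hd_drop_conv_nth)
  have "dpath R (rev ?D)" using dD sym dpath_rev_sym by metis
  moreover have "R (last ?T) (hd (rev ?D))" using lT lD l sym Dne by (simp add: hd_rev)
  moreover have "R (last (rev ?D)) (hd ?T)" using hD hT h sym Dne by (simp add: last_rev)
  ultimately show ?thesis using dT Tne Dne unfolding cyc_def flip_def
    by (simp add: dpath_append)
qed

lemma flip_adj:
  assumes P: "P = ys @ a # b # zs" and i: "i \<noteq> length ys"
  shows "adj (flip i P) a b \<or> adj (flip i P) b a"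
proof (cases "i < length ys")
  case True
  have "drop (i+1) P = drop (i+1) ys @ a # b # zs" using P True by simp
  then have "rev (drop (i+1) P) = rev zs @ b # a # rev (drop (i+1) ys)" by simp
  then have "adj (rev (drop (i+1) P)) b a" by (metis adj_split)
  then show ?thesis unfolding flip_def by (simp add: adj_append)
next
  case False
  then have gt: "i > length ys" using i by simp
  have "take (i+1) P = ys @ a # b # take (i - length ys - 1) zs"
  proof -
    have e: "Suc i - length ys = Suc (Suc (i - Suc (length ys)))" using gt by simp
    have e2: "take (Suc i) ys = ys" using gt by simp
    show ?thesis using P by (simp add: take_append e e2)
  qed
  then have "adj (take (i+1) P) a b" by (metis adj_split)
  then show ?thesis unfolding flip_def by (simp add: adj_append)
qed


lemma dpath_mono_on:
  "dpath R xs \<Longrightarrow> (\<And>x y. x \<in> set xs \<Longrightarrow> y \<in> set xs \<Longrightarrow> R x y \<Longrightarrow> R' x y) \<Longrightarrow> dpath R' xs"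
  by (induction R xs rule: dpath.induct) auto

lemma cyc_extend:
  assumes sym: "\<forall>a b. R a b \<longrightarrow> R b a" and cQ: "cyc R Q" and dQ: "distinct Q"
    and ab: "adj Q a b" and c: "c \<in> set Q" and z: "z \<notin> set Q" and zc: "R z c"
  shows "\<exists>P'. dpath R P' \<and> distinct P' \<and> set P' = insert z (set Q) \<and> (adj P' a b \<or> adj P' b a)"
proof -
  obtain ys zs where Q: "Q = ys @ c # zs" using c by (meson split_list)
  have cr: "cyc R (c # zs @ ys)" using cQ Q cyc_rot by metis
  have "adj ys a b \<or> adj (c # zs) a b \<or> (ys \<noteq> [] \<and> last ys = a \<and> hd (c # zs) = b)"
    using ab Q adj_append by metis
  then show ?thesis
  proof (cases "adj ys a b \<or> adj (c # zs) a b")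
    case True
    note h = True
    let ?P = "z # c # zs @ ys"
    have "dpath R ?P" using cr zc unfolding cyc_def by (simp add: dpath_Cons)
    moreover have "adj ?P a b"
    proof -
      have "adj ((c # zs) @ ys) a b" using h adj_append by metis
      then show ?thesis by (simp add: adj_Cons)
    qed
    moreover have "distinct ?P" using dQ z Q by auto
    moreover have "set ?P = insert z (set Q)" using Q by auto
    ultimately show ?thesis by blast
  next
    case False
    then have h: "ys \<noteq> [] \<and> last ys = a \<and> hd (c # zs) = b"
      using \<open>adj ys a b \<or> adj (c # zs) a b \<or> (ys \<noteq> [] \<and> last ys = a \<and> hd (c # zs) = b)\<close> by blast
    let ?P = "z # c # rev (zs @ ys)"
    have cr2: "cyc R (c # rev (zs @ ys))" using cyc_rev_tail[OF sym cr] .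
    have "dpath R ?P" using cr2 zc unfolding cyc_def by (simp add: dpath_Cons)
    moreover have "adj ?P b a"
    proof -
      have "hd (rev (zs @ ys)) = a" using h by (simp add: hd_rev)
      moreover have "rev (zs @ ys) \<noteq> []" using h by simp
      ultimately have "adj (c # rev (zs @ ys)) c a" by (simp add: adj_Cons)
      then show ?thesis using h by (simp add: adj_Cons)
    qed
    moreover have "distinct ?P" using dQ z Q by auto
    moreover have "set ?P = insert z (set Q)" using Q by auto
    ultimately show ?thesis by blast
  qed
qed

lemma ham_connected:
  fixes D :: "'a \<Rightarrow> 'a \<Rightarrow> bool"
  assumes fin: "finite V" and symD: "\<forall>a b. D a b \<longrightarrow> D b a" and irr: "\<forall>a. \<not> D a a"
    and DV: "\<forall>a b. D a b \<longrightarrow> a \<in> V \<and> b \<in> V"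
    and deg: "\<forall>x\<in>V. card V + 1 \<le> 2 * card {y. D x y}"
    and u: "u \<in> V" and v: "v \<in> V" and uv: "u \<noteq> v"
  shows "\<exists>P. dpath D P \<and> distinct P \<and> set P = V \<and> hd P = u \<and> last P = v"
proof -
  define R where "R a b \<longleftrightarrow> D a b \<or> (a = u \<and> b = v) \<or> (a = v \<and> b = u)" for a b
  have symR: "\<forall>a b. R a b \<longrightarrow> R b a" using symD by (auto simp: R_def)
  have irrR: "\<forall>a. \<not> R a a" using irr uv by (auto simp: R_def)
  have RV: "\<And>a b. R a b \<Longrightarrow> a \<in> V \<and> b \<in> V" using DV u v by (auto simp: R_def)
  have finR: "\<And>x. finite {y. R x y}" using RV fin by (metis mem_Collect_eq rev_finite_subset subsetI)
  have degR: "\<And>x. x \<in> V \<Longrightarrow> card V + 1 \<le> 2 * card {y. R x y}"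
  proof -
    fix x assume x: "x \<in> V"
    have "card {y. D x y} \<le> card {y. R x y}" using finR by (intro card_mono) (auto simp: R_def)
    then show "card V + 1 \<le> 2 * card {y. R x y}" using deg x by fastforce
  qed
  define n where "n = card V"
  have n3: "n \<ge> 3"
  proof -
    have "{y. D u y} \<subseteq> V - {u}" using DV irr by auto
    then have "card {y. D u y} \<le> card (V - {u})" using fin by (intro card_mono) auto
    also have "\<dots> = n - 1" using u fin n_def by simp
    finally show ?thesis using deg u n_def by fastforce
  qed
  define good where "good P \<longleftrightarrow> dpath R P \<and> distinct P \<and> set P \<subseteq> V \<and> (adj P u v \<or> adj P v u)" for P
  have g0: "good [u, v]" using u v uv by (simp add: good_def R_def)
  have bnd: "\<forall>P. good P \<longrightarrow> length P < n + 1"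
  proof (intro allI impI)
    fix P assume "good P"
    then have "distinct P" "set P \<subseteq> V" by (auto simp: good_def)
    then have "length P \<le> n" using fin n_def by (metis card_mono distinct_card)
    then show "length P < n + 1" by simp
  qed
  obtain P where gP: "good P" and maxP: "\<And>P'. good P' \<Longrightarrow> length P' \<le> length P"
    using ex_has_greatest_nat[of good "[u,v]" length "n+1"] g0 bnd by blast
  define k where "k = length P"
  have dpP: "dpath R P" and dP: "distinct P" and sP: "set P \<subseteq> V" and aP: "adj P u v \<or> adj P v u"
    using gP by (auto simp: good_def)
  have k2: "k \<ge> 2" using aP k_def by (auto simp: adj_nth)
  have kn: "k \<le> n" using bnd gP k_def by fastforce
  have Pne: "P \<noteq> []" using k2 k_def by auto
  have hdV: "hd P \<in> V" and lastV: "last P \<in> V" using sP Pne by auto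
  have N1: "{y. R (hd P) y} \<subseteq> set P"
  proof
    fix y assume y: "y \<in> {y. R (hd P) y}"
    show "y \<in> set P"
    proof (rule ccontr)
      assume ny: "y \<notin> set P"
      have "good (y # P)"
        unfolding good_def using dpP dP sP aP ny y symR RV Pne
        by (auto simp: dpath_Cons adj_Cons)
      then show False using maxP by fastforce
    qed
  qed
  have N2: "{y. R (last P) y} \<subseteq> set P"
  proof
    fix y assume y: "y \<in> {y. R (last P) y}"
    show "y \<in> set P"
    proof (rule ccontr)
      assume ny: "y \<notin> set P"
      have "dpath R (P @ [y])" using dpP y Pne by (simp add: dpath_append)
      moreover have "adj (P @ [y]) u v \<or> adj (P @ [y]) v u" using aP by (auto simp: adj_append)
      ultimately have "good (P @ [y])"
        unfolding good_def using dP sP ny y RV by auto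
      then show False using maxP by fastforce
    qed
  qed
  have degs: "card {y. R (hd P) y} + card {y. R (last P) y} \<ge> k + 1"
    using degR[OF hdV] degR[OF lastV] kn n_def by linarith
  obtain a b ys zs where P: "P = ys @ a # b # zs" and ab: "(a = u \<and> b = v) \<or> (a = v \<and> b = u)"
  proof (cases "adj P u v")
    case True
    then obtain ys zs where "P = ys @ u # v # zs" by (meson adj_splitD)
    then show ?thesis by (rule that[of ys u v zs]) auto
  next
    case False
    then have "adj P v u" using aP by simp
    then obtain ys zs where "P = ys @ v # u # zs" by (meson adj_splitD)
    then show ?thesis by (rule that[of ys v u zs]) auto
  qed
  obtain i where i: "i \<noteq> length ys" "i + 1 < k" "R (hd P) (P ! (i+1))" "R (last P) (P ! i)"
    using crossing[OF dP k_def[symmetric] k2 irrR N1 N2 degs, of "length ys"] by blast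
  define Q where "Q = flip i P"
  have cQ: "cyc R Q" unfolding Q_def using flip_cyc[OF symR dpP] i k_def by simp
  have dQ: "distinct Q" unfolding Q_def using flip_distinct[OF dP] .
  have sQ: "set Q = set P" unfolding Q_def by (rule flip_set)
  have lQ: "length Q = k" unfolding Q_def k_def by (rule flip_length)
  have aQ: "adj Q a b \<or> adj Q b a" unfolding Q_def using flip_adj[OF P i(1)] .
  have aQ': "adj Q u v \<or> adj Q v u" using aQ ab by auto
  show ?thesis
  proof (cases "set P = V")
    case True
    obtain a' b' where a'b': "adj Q a' b'" and ab': "(a' = u \<and> b' = v) \<or> (a' = v \<and> b' = u)"
      using aQ' by blast
    obtain ys' zs' where Q': "Q = ys' @ a' # b' # zs'" using a'b' by (meson adj_splitD)
    have "Q = (ys' @ [a']) @ b' # zs'" using Q' by simp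
    then have "cyc R (b' # zs' @ ys' @ [a'])" using cQ cyc_rot by metis
    then have dW: "dpath R (b' # (zs' @ ys') @ [a'])" by (simp add: cyc_def)
    define mid where "mid = zs' @ ys'"
    have "k = n" using True distinct_card[OF dP] k_def n_def by simp
    then have "length Q \<ge> 3" using lQ n3 by simp
    then have midne: "mid \<noteq> []" using Q' mid_def by auto
    have nmid: "\<forall>x\<in>set mid. x \<noteq> u \<and> x \<noteq> v" using dQ Q' ab' mid_def by auto
    have "dpath R ((b' # mid) @ [a'])" using dW mid_def by simp
    then have "dpath R (b' # mid) \<and> R (last (b' # mid)) a'"
      using dpath_append[of R "b' # mid" "[a']"] by simp
    then have dW2: "dpath R (b' # mid)" and dW3: "R (last (b' # mid)) a'" by auto
    have "dpath R mid" using dW2 by (simp add: dpath_Cons)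
    then have dmid: "dpath D mid"
      by (rule dpath_mono_on) (use nmid in \<open>auto simp: R_def\<close>)
    have e1: "D b' (hd mid)"
      using dW2 midne nmid by (auto simp: dpath_Cons R_def)
    have e2: "D (last mid) a'" using dW3 midne nmid by (auto simp: R_def)
    have dDW: "dpath D (b' # mid @ [a'])"
      using dmid e1 e2 midne by (simp add: dpath_append dpath_Cons)
    have distW: "distinct (b' # mid @ [a'])" using dQ Q' mid_def by auto
    have setW: "set (b' # mid @ [a']) = V" using sQ True Q' mid_def by auto
    show ?thesis
    proof (cases "b' = u")
      case True
      then have "a' = v" using ab' uv by auto
      then show ?thesis using dDW distW setW True by (intro exI[of _ "b' # mid @ [a']"]) simp
    next
      case False
      then have bv: "b' = v" "a' = u" using ab' by auto
      have "dpath D (rev (b' # mid @ [a']))" using dDW dpath_rev_sym symD by metis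
      moreover have "distinct (rev (b' # mid @ [a']))" using distW by (simp only: distinct_rev)
      moreover have "set (rev (b' # mid @ [a'])) = V" using setW by (simp only: set_rev)
      ultimately show ?thesis using bv by (intro exI[of _ "rev (b' # mid @ [a'])"]) simp
    qed
  next
    case False
    then obtain z where z: "z \<in> V" "z \<notin> set P" using sP by blast
    have c1: "card {y. R (hd P) y} \<le> k - 1"
    proof -
      have "{y. R (hd P) y} \<subseteq> set P - {hd P}" using N1 irrR by auto
      then have "card {y. R (hd P) y} \<le> card (set P - {hd P})" by (intro card_mono) auto
      also have "\<dots> = k - 1" using distinct_card[OF dP] k_def Pne by simp
      finally show ?thesis .
    qed
    have "\<exists>c\<in>set P. R z c"
    proof (rule ccontr)
      assume "\<not> (\<exists>c\<in>set P. R z c)"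
      then have "{y. R z y} \<subseteq> V - set P - {z}" using RV irrR by auto
      then have "card {y. R z y} \<le> card (V - set P - {z})" using fin by (intro card_mono) auto
      also have "\<dots> = n - k - 1"
        using fin sP z distinct_card[OF dP] k_def n_def by (simp add: card_Diff_subset)
      finally have "card {y. R z y} \<le> n - k - 1" .
      then show False using degR[OF z(1)] degR[OF hdV] c1 n_def k2 kn by linarith
    qed
    then obtain c where c: "c \<in> set Q" "R z c" using sQ by auto
    obtain P' where P': "dpath R P'" "distinct P'" "set P' = insert z (set Q)"
      "adj P' a b \<or> adj P' b a"
    proof (cases "adj Q a b")
      case True
      show ?thesis using cyc_extend[OF symR cQ dQ True c(1) _ c(2)] z sQ that by auto
    next
      case False
      then have "adj Q b a" using aQ by simp
      from cyc_extend[OF symR cQ dQ this c(1) _ c(2)] z sQ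
      obtain P' where "dpath R P'" "distinct P'" "set P' = insert z (set Q)" "adj P' b a \<or> adj P' a b"
        by auto
      then show ?thesis using that by auto
    qed
    have "good P'" unfolding good_def using P' ab sP z sQ by auto
    moreover have "length P' = k + 1"
    proof -
      have "length P' = card (insert z (set Q))" using P'(2,3) distinct_card by metis
      also have "\<dots> = Suc (card (set Q))" using z sQ by simp
      also have "\<dots> = k + 1" using distinct_card[OF dQ] lQ by simp
      finally show ?thesis .
    qed
    ultimately show ?thesis using maxP k_def by fastforce
  qed
qed


lemma adj2_triple:
  assumes d: "distinct Q" and ab: "adj Q a b \<or> adj Q b a" and bc: "adj Q b c \<or> adj Q c b"
    and ac: "a \<noteq> c" and symP: "\<forall>x y. P x y = P y x" and diff: "P a b \<noteq> P b c"
  shows "\<exists>j. j + 2 < length Q \<and> P (Q ! j) (Q ! (j+1)) \<noteq> P (Q ! (j+1)) (Q ! (j+2))"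
proof -
  have idx: "\<And>i j. i < length Q \<Longrightarrow> j < length Q \<Longrightarrow> Q ! i = Q ! j \<Longrightarrow> i = j"
    using d nth_eq_iff_index_eq by metis
  obtain p where p: "Suc p < length Q" "(Q ! p = a \<and> Q ! Suc p = b) \<or> (Q ! p = b \<and> Q ! Suc p = a)"
    using ab by (auto simp: adj_nth)
  obtain q where q: "Suc q < length Q" "(Q ! q = b \<and> Q ! Suc q = c) \<or> (Q ! q = c \<and> Q ! Suc q = b)"
    using bc by (auto simp: adj_nth)
  show ?thesis
  proof (cases "Q ! p = a \<and> Q ! Suc p = b")
    case pa: True
    show ?thesis
    proof (cases "Q ! q = b \<and> Q ! Suc q = c")
      case True
      then have "q = Suc p" using idx pa p q by (metis Suc_lessD)
      then show ?thesis using pa True diff q p by (intro exI[of _ p]) simp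
    next
      case False
      then have qc: "Q ! q = c" "Q ! Suc q = b" using q by auto
      then have "Suc q = Suc p" using idx[of "Suc q" "Suc p"] pa p q by simp
      then have "q = p" by simp
      then show ?thesis using qc pa ac by simp
    qed
  next
    case False
    then have pb: "Q ! p = b" "Q ! Suc p = a" using p by auto
    show ?thesis
    proof (cases "Q ! q = b \<and> Q ! Suc q = c")
      case True
      then have "q = p" using idx pb p q by (metis Suc_lessD)
      then show ?thesis using True pb ac by simp
    next
      case False
      then have qc: "Q ! q = c" "Q ! Suc q = b" using q by auto
      then have "p = Suc q" using idx pb p q by (metis Suc_lessD)
      then have e1: "Q ! q = c" "Q ! (q+1) = b" "Q ! (q+2) = a" "q + 2 < length Q"
        using qc pb p by (simp_all add: numeral_2_eq_2)
      have "P c b \<noteq> P b a" using diff symP by metis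
      then show ?thesis using e1 by (intro exI[of _ q]) simp
    qed
  qed
qed

lemma chord:
  fixes D P :: "'a \<Rightarrow> 'a \<Rightarrow> bool"
  assumes fin: "finite V" and symD: "\<forall>a b. D a b \<longrightarrow> D b a" and irr: "\<forall>a. \<not> D a a"
    and DV: "\<forall>a b. D a b \<longrightarrow> a \<in> V \<and> b \<in> V"
    and deg: "\<forall>x\<in>V. card V + 1 \<le> 2 * card {y. D x y}"
    and PD: "\<forall>a b. P a b \<longrightarrow> D a b" and symP: "\<forall>a b. P a b = P b a"
    and cQ0: "cyc P Q0" and dQ0: "distinct Q0" and sQ0: "set Q0 = V"
    and st: "D s t" and nst: "\<not> P s t"
  shows "\<exists>Q2 j. cyc D Q2 \<and> distinct Q2 \<and> set Q2 = V \<and> j + 2 < length Q2 \<and>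
           P (Q2 ! j) (Q2 ! (j+1)) \<noteq> P (Q2 ! (j+1)) (Q2 ! (j+2))"
proof -
  have sV: "s \<in> V" and tV: "t \<in> V" using DV st by auto
  have snt: "s \<noteq> t" using irr st by auto
  obtain ys zs where Q0: "Q0 = ys @ s # zs" using sV sQ0 by (metis split_list)
  have cQ1: "cyc P (s # zs @ ys)" using cQ0 Q0 cyc_rot by metis
  have dQ1: "distinct (s # zs @ ys)" using dQ0 Q0 by auto
  have sQ1: "set (s # zs @ ys) = V" using sQ0 Q0 by auto
  have "t \<in> set (zs @ ys)" using tV snt sQ1 by auto
  then obtain B C where BC: "zs @ ys = B @ t # C" by (metis split_list)
  have dp1: "dpath P (s # B @ t # C)" and cl1: "P (last (s # B @ t # C)) s"
    using cQ1 BC unfolding cyc_def by auto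
  have dQ1': "distinct (s # B @ t # C)" using dQ1 BC by simp
  have sQ1': "set (s # B @ t # C) = V" using sQ1 BC by simp
  have Bne: "B \<noteq> []"
  proof
    assume "B = []"
    then have "P s t" using dp1 by simp
    then show False using nst by simp
  qed
  have Cne: "C \<noteq> []"
  proof
    assume "C = []"
    then have "P t s" using cl1 by simp
    then show False using nst symP by simp
  qed
  have "dpath P ((s # B) @ (t # C))" using dp1 by simp
  then have dsB: "dpath P (s # B)" and dtC: "dpath P (t # C)" and jBt: "P (last B) t"
    using Bne dpath_append[of P "s # B" "t # C"] by auto
  have sB: "P s (hd B)" and dB: "dpath P B" using dsB Bne by (auto simp: dpath_Cons)
  have tC: "P t (hd C)" and dC: "dpath P C" using dtC Cne by (auto simp: dpath_Cons)
  define R1 where "R1 = rev B @ s # t # C"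
  have PDm: "\<And>a b. P a b \<Longrightarrow> D a b" using PD by blast
  have dR1: "dpath D R1"
  proof -
    have "dpath D B" using dB dpath_mono PDm by metis
    then have "dpath D (rev B)" using dpath_rev_sym symD by metis
    moreover have "dpath D (s # t # C)" using st dtC dpath_mono PDm by (metis dpath.simps(1))
    moreover have "D (last (rev B)) s" using sB PD symD Bne by (simp add: last_rev)
    ultimately show ?thesis unfolding R1_def using Bne by (simp add: dpath_append)
  qed
  have dist1: "distinct R1" using dQ1' unfolding R1_def by auto
  have set1: "set R1 = V" using sQ1' unfolding R1_def by auto
  define n where "n = card V"
  have len1: "length R1 = n" using dist1 set1 distinct_card n_def by metis
  have n2: "n \<ge> 2" using len1 unfolding R1_def using Bne by (cases B) auto
  have R1ne: "R1 \<noteq> []" unfolding R1_def by simp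
  have hdV: "hd R1 \<in> V" and lastV: "last R1 \<in> V" using set1 R1ne by auto
  have N1: "{y. D (hd R1) y} \<subseteq> set R1" using DV set1 by auto
  have N2: "{y. D (last R1) y} \<subseteq> set R1" using DV set1 by auto
  have degs: "card {y. D (hd R1) y} + card {y. D (last R1) y} \<ge> n + 1"
  proof -
    have "card V + 1 \<le> 2 * card {y. D (hd R1) y}" using deg hdV by blast
    moreover have "card V + 1 \<le> 2 * card {y. D (last R1) y}" using deg lastV by blast
    ultimately show ?thesis using n_def by linarith
  qed
  obtain i where i: "i \<noteq> length B" "i + 1 < n" "D (hd R1) (R1 ! (i+1))" "D (last R1) (R1 ! i)"
    using crossing[OF dist1 len1 n2 irr N1 N2 degs, of "length B"] by blast
  define Q2 where "Q2 = flip i R1"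
  have cQ2: "cyc D Q2" unfolding Q2_def using flip_cyc[OF symD dR1] i len1 by simp
  have dQ2: "distinct Q2" unfolding Q2_def using flip_distinct[OF dist1] .
  have sQ2: "set Q2 = V" unfolding Q2_def using flip_set set1 by metis
  have aST: "adj Q2 s t \<or> adj Q2 t s"
    unfolding Q2_def using flip_adj[of R1 "rev B" s t C i] i(1) R1_def by simp
  have hdB: "hd B \<in> set B" using Bne by simp
  have hdC: "hd C \<in> set C" using Cne by simp
  show ?thesis
  proof (cases "i = length B - 1")
    case False
    have rB: "rev B = butlast (rev B) @ [hd B]" using Bne
      by (metis append_butlast_last_id last_rev rev_is_Nil_conv)
    have "R1 = butlast (rev B) @ hd B # s # (t # C)" unfolding R1_def using rB
      by (metis append.assoc append_Cons append_Nil)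
    moreover have "i \<noteq> length (butlast (rev B))" using False by simp
    ultimately have a1: "adj Q2 (hd B) s \<or> adj Q2 s (hd B)" unfolding Q2_def using flip_adj by metis
    have ne: "hd B \<noteq> t" using dQ1' hdB by auto
    have "P (hd B) s \<noteq> P s t" using sB symP nst by simp
    from adj2_triple[OF dQ2 a1 aST ne _ this] symP show ?thesis using cQ2 dQ2 sQ2 by blast
  next
    case True
    then have i2: "i \<noteq> length (rev B @ [s])" by simp
    have "R1 = (rev B @ [s]) @ t # hd C # tl C" unfolding R1_def using Cne by simp
    then have a1: "adj Q2 t (hd C) \<or> adj Q2 (hd C) t" unfolding Q2_def using flip_adj i2 by metis
    have aTS: "adj Q2 s t \<or> adj Q2 t s" using aST .
    have ne: "s \<noteq> hd C" using dQ1' hdC by auto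
    have "P s t \<noteq> P t (hd C)" using tC nst by simp
    from adj2_triple[OF dQ2 aTS a1 ne _ this] symP show ?thesis using cQ2 dQ2 sQ2 by blast
  qed
qed

lemma greedy:
  assumes "\<forall>i<m. \<exists>a b. a \<in> f i \<and> b \<in> f i \<and> a \<noteq> b"
  shows "\<exists>g. (\<forall>i<m. g i \<in> f i) \<and> (0 < m \<longrightarrow> g 0 \<noteq> s) \<and> (\<forall>i. Suc i < m \<longrightarrow> g i \<noteq> g (Suc i))"
  using assms
proof (induction m)
  case 0 then show ?case by simp
next
  case (Suc m)
  then obtain g where g: "\<forall>i<m. g i \<in> f i" "0 < m \<longrightarrow> g 0 \<noteq> s" "\<forall>i. Suc i < m \<longrightarrow> g i \<noteq> g (Suc i)"
    by auto
  define w where "w = (if m = 0 then s else g (m - 1))"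
  obtain a b where ab: "a \<in> f m" "b \<in> f m" "a \<noteq> b" using Suc.prems by blast
  define x where "x = (if a \<noteq> w then a else b)"
  have x: "x \<in> f m" "x \<noteq> w" using ab x_def by auto
  define g' where "g' = g(m := x)"
  have "\<forall>i<Suc m. g' i \<in> f i" using g x g'_def by (auto simp: less_Suc_eq)
  moreover have "0 < Suc m \<longrightarrow> g' 0 \<noteq> s" using g x g'_def w_def by auto
  moreover have "\<forall>i. Suc i < Suc m \<longrightarrow> g' i \<noteq> g' (Suc i)"
  proof (intro allI impI)
    fix i assume i: "Suc i < Suc m"
    show "g' i \<noteq> g' (Suc i)"
    proof (cases "Suc i < m")
      case True then show ?thesis using g g'_def by auto
    next
      case False
      then have "Suc i = m" using i by simp
      then show ?thesis using x w_def g'_def by auto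
    qed
  qed
  ultimately show ?case by blast
qed

lemma greedy2:
  assumes m: "m \<ge> 1" and two: "\<forall>i<m. \<exists>a b. a \<in> f i \<and> b \<in> f i \<and> a \<noteq> b"
    and lst: "\<exists>a b. a \<in> f (m-1) \<and> b \<in> f (m-1) \<and> a \<noteq> b \<and> a \<noteq> t \<and> b \<noteq> t"
  shows "\<exists>g. (\<forall>i<m. g i \<in> f i) \<and> g 0 \<noteq> s \<and> (\<forall>i. Suc i < m \<longrightarrow> g i \<noteq> g (Suc i)) \<and> g (m-1) \<noteq> t"
proof -
  obtain g where g: "\<forall>i<m-1. g i \<in> f i" "0 < m-1 \<longrightarrow> g 0 \<noteq> s" "\<forall>i. Suc i < m-1 \<longrightarrow> g i \<noteq> g (Suc i)"
    using greedy[of "m-1" f s] two by auto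
  define w where "w = (if m - 1 = 0 then s else g (m - 2))"
  obtain a b where ab: "a \<in> f (m-1)" "b \<in> f (m-1)" "a \<noteq> b" "a \<noteq> t" "b \<noteq> t" using lst by blast
  define x where "x = (if a \<noteq> w then a else b)"
  have x: "x \<in> f (m-1)" "x \<noteq> w" "x \<noteq> t" using ab x_def by auto
  define g' where "g' = g(m-1 := x)"
  have "\<forall>i<m. g' i \<in> f i" using g x g'_def m by (auto simp: less_Suc_eq)
  moreover have "g' 0 \<noteq> s" using g x g'_def w_def by auto
  moreover have "\<forall>i. Suc i < m \<longrightarrow> g' i \<noteq> g' (Suc i)"
  proof (intro allI impI)
    fix i assume i: "Suc i < m"
    show "g' i \<noteq> g' (Suc i)"
    proof (cases "Suc i < m - 1")
      case True then show ?thesis using g g'_def by auto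
    next
      case False
      then have e: "Suc i = m - 1" using i by simp
      then have "m - 2 = i" "m - 1 \<noteq> 0" "i \<noteq> m - 1" by auto
      then have "w = g i" using w_def by simp
      then show ?thesis using x g'_def e \<open>i \<noteq> m - 1\<close> by simp
    qed
  qed
  moreover have "g' (m-1) \<noteq> t" using x g'_def by simp
  ultimately show ?thesis by blast
qed


lemma pc_from_cycle:
  fixes V :: "'a set" and E :: "'e set" and ends :: "'e \<Rightarrow> 'a set" and phi :: "'e \<Rightarrow> nat"
  assumes dQ: "distinct Q" and sQ: "set Q = V" and n: "length Q = n" and n2: "n \<ge> 2"
    and two: "\<forall>i. Suc i < n \<longrightarrow> (\<exists>a b. a \<in> phi ` edges_between E ends (Q ! i) (Q ! Suc i) \<and>
                 b \<in> phi ` edges_between E ends (Q ! i) (Q ! Suc i) \<and> a \<noteq> b)"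
    and e0: "e0 \<in> edges_between E ends (Q ! (n-1)) (Q ! 0)"
    and prev: "\<exists>a b. a \<in> phi ` edges_between E ends (Q ! (n-2)) (Q ! (n-1)) \<and>
                 b \<in> phi ` edges_between E ends (Q ! (n-2)) (Q ! (n-1)) \<and> a \<noteq> b \<and> a \<noteq> phi e0 \<and> b \<noteq> phi e0"
  shows "has_pc_hamiltonian_cycle V E ends phi"
proof -
  define m where "m = n - 1"
  define f where "f i = phi ` edges_between E ends (Q ! i) (Q ! Suc i)" for i
  have m1: "m \<ge> 1" using n2 m_def by simp
  have two': "\<forall>i<m. \<exists>a b. a \<in> f i \<and> b \<in> f i \<and> a \<noteq> b" using two m_def f_def by auto
  have m2: "m - 1 = n - 2" and m3: "Suc (m - 1) = n - 1" using m_def n2 by auto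
  have lst: "\<exists>a b. a \<in> f (m-1) \<and> b \<in> f (m-1) \<and> a \<noteq> b \<and> a \<noteq> phi e0 \<and> b \<noteq> phi e0"
    using prev unfolding f_def m2 m3[unfolded m2] .
  obtain g where g: "\<forall>i<m. g i \<in> f i" "g 0 \<noteq> phi e0" "\<forall>i. Suc i < m \<longrightarrow> g i \<noteq> g (Suc i)"
    "g (m-1) \<noteq> phi e0"
    using greedy2[OF m1 two' lst, of "phi e0"] by blast
  define F where "F i = (if i < m then (SOME e. e \<in> edges_between E ends (Q ! i) (Q ! Suc i) \<and> phi e = g i) else e0)" for i
  have Fi: "F i \<in> edges_between E ends (Q ! i) (Q ! Suc i) \<and> phi (F i) = g i" if i: "i < m" for i
  proof -
    have "g i \<in> phi ` edges_between E ends (Q ! i) (Q ! Suc i)" using g(1) i f_def by auto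
    then have "\<exists>e. e \<in> edges_between E ends (Q ! i) (Q ! Suc i) \<and> phi e = g i" by auto
    then have "(SOME e. e \<in> edges_between E ends (Q ! i) (Q ! Suc i) \<and> phi e = g i) \<in> edges_between E ends (Q ! i) (Q ! Suc i) \<and>
      phi (SOME e. e \<in> edges_between E ends (Q ! i) (Q ! Suc i) \<and> phi e = g i) = g i" by (rule someI_ex)
    then show ?thesis unfolding F_def using i by simp
  qed
  define fs where "fs = map F [0..<n]"
  have fsi: "i < n \<Longrightarrow> fs ! i = F i" for i unfolding fs_def by simp
  have "pc_hamiltonian_cycle V E ends phi Q fs"
    unfolding pc_hamiltonian_cycle_def Let_def
  proof (intro conjI allI impI)
    show "distinct Q" by (rule dQ)
    show "set Q = V" by (rule sQ)
    show "length fs = length Q" using n fs_def by simp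
  next
    fix i assume i: "i < length Q"
    show "fs ! i \<in> edges_between E ends (Q ! i) (Q ! ((i + 1) mod length Q))"
    proof (cases "i < m")
      case True
      then have "(i + 1) mod length Q = Suc i" using n m_def by simp
      then show ?thesis using Fi[OF True] fsi i n by simp
    next
      case False
      then have "i = n - 1" using i n m_def by simp
      moreover have "(i + 1) mod length Q = 0" using \<open>i = n - 1\<close> n n2 by simp
      ultimately show ?thesis using fsi i n e0 F_def m_def by simp
    qed
  next
    fix i assume i: "i < length Q"
    show "phi (fs ! i) \<noteq> phi (fs ! ((i + 1) mod length Q))"
    proof (cases "Suc i < m")
      case True
      then have "(i + 1) mod length Q = Suc i" using n m_def by simp
      then show ?thesis using Fi[of i] Fi[of "Suc i"] True fsi i n g(3) m_def by simp
    next
      case False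
      show ?thesis
      proof (cases "Suc i = m")
        case True
        then have "(i + 1) mod length Q = m" using n m_def n2 by simp
        moreover have "fs ! m = e0" using fsi[of m] F_def m_def n2 by simp
        moreover have "phi (fs ! i) = g (m-1)"
        proof -
          have "i = m - 1" using True by simp
          then show ?thesis using Fi[of i] True fsi i n by simp
        qed
        ultimately show ?thesis using g(4) by simp
      next
        case False
        then have "i = n - 1" using i n m_def \<open>\<not> Suc i < m\<close> by simp
        then have "(i + 1) mod length Q = 0" using n n2 by simp
        moreover have "fs ! i = e0" using fsi i n F_def m_def \<open>i = n - 1\<close> by simp
        moreover have "phi (fs ! 0) = g 0" using Fi[of 0] fsi[of 0] m1 n2 by simp
        ultimately show ?thesis using g(2) by simp
      qed
    qed
  qed
  then show ?thesis unfolding has_pc_hamiltonian_cycle_def by blast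
qed

lemma choose_c:
  assumes "\<exists>a b. a \<in> L1 \<and> b \<in> L1 \<and> a \<noteq> b" and "\<exists>a b. a \<in> L2 \<and> b \<in> L2 \<and> a \<noteq> b"
    and "L1 \<noteq> L2"
  shows "\<exists>c\<in>L2. \<exists>a b. a \<in> L1 \<and> b \<in> L1 \<and> a \<noteq> b \<and> a \<noteq> c \<and> b \<noteq> c"
proof (cases "L2 \<subseteq> L1")
  case False
  then obtain c where c: "c \<in> L2" "c \<notin> L1" by blast
  obtain a b where ab: "a \<in> L1" "b \<in> L1" "a \<noteq> b" using assms(1) by blast
  have "a \<noteq> c" "b \<noteq> c" using ab c by auto
  then show ?thesis using ab c by blast
next
  case True
  then obtain d where d: "d \<in> L1" "d \<notin> L2" using assms(3) by blast
  obtain x y where xy: "x \<in> L2" "y \<in> L2" "x \<noteq> y" using assms(2) by blast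
  have "d \<noteq> y" "d \<noteq> x" using d xy by auto
  then show ?thesis using xy d True by blast
qed

lemma triple_pc:
  fixes V :: "'a set" and E :: "'e set" and ends :: "'e \<Rightarrow> 'a set" and phi :: "'e \<Rightarrow> nat"
  assumes cQ: "cyc D Q" and dQ: "distinct Q" and sQ: "set Q = V" and n: "length Q = n" and n3: "n \<ge> 3"
    and Dtwo: "\<forall>a b. D a b \<longrightarrow> (\<exists>x y. x \<in> phi ` edges_between E ends a b \<and> y \<in> phi ` edges_between E ends a b \<and> x \<noteq> y)"
    and i: "i + 2 < n"
    and diff: "phi ` edges_between E ends (Q ! i) (Q ! (i+1)) \<noteq> phi ` edges_between E ends (Q ! (i+1)) (Q ! (i+2))"
  shows "has_pc_hamiltonian_cycle V E ends phi"
proof -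
  define Q' where "Q' = rotate (i+2) Q"
  have cQ': "cyc D Q'" unfolding Q'_def using cQ by (rule cyc_rotate)
  have dQ': "distinct Q'" and sQ': "set Q' = V" and lQ': "length Q' = n"
    unfolding Q'_def using dQ sQ n by auto
  have nth': "Q' ! j = Q ! ((i + 2 + j) mod n)" if "j < n" for j
    unfolding Q'_def using nth_rotate[of j Q "i+2"] that n by simp
  have q1: "Q' ! (n-2) = Q ! i"
  proof -
    have "i + 2 + (n-2) = i + n" using n3 by simp
    then have "(i + 2 + (n-2)) mod n = i" using i by simp
    then show ?thesis using nth'[of "n-2"] n3 by simp
  qed
  have q2: "Q' ! (n-1) = Q ! (i+1)"
  proof -
    have "i + 2 + (n-1) = (i + 1) + n" using n3 by simp
    moreover have "((i + 1) + n) mod n = (i + 1) mod n" by (rule mod_add_self2)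
    moreover have "(i + 1) mod n = i + 1" using i by simp
    ultimately have "(i + 2 + (n-1)) mod n = i + 1" by simp
    then show ?thesis using nth'[of "n-1"] n3 by simp
  qed
  have q3: "Q' ! 0 = Q ! (i+2)" using nth'[of 0] i n3 by simp
  have dp: "dpath D Q'" using cQ' by (simp add: cyc_def)
  have two: "\<forall>j. Suc j < n \<longrightarrow> (\<exists>a b. a \<in> phi ` edges_between E ends (Q' ! j) (Q' ! Suc j) \<and>
                 b \<in> phi ` edges_between E ends (Q' ! j) (Q' ! Suc j) \<and> a \<noteq> b)"
    using dp Dtwo lQ' by (auto simp: dpath_nth)
  have D1: "D (Q ! i) (Q ! (i+1))" using cQ dQ i n
    by (auto simp: cyc_def dpath_nth)
  have D2: "D (Q ! (i+1)) (Q ! (i+2))"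
  proof -
    have "Suc (i+1) < length Q" using i n by simp
    then show ?thesis using cQ by (auto simp: cyc_def dpath_nth)
  qed
  obtain c where c: "c \<in> phi ` edges_between E ends (Q ! (i+1)) (Q ! (i+2))"
    and ab: "\<exists>a b. a \<in> phi ` edges_between E ends (Q ! i) (Q ! (i+1)) \<and>
               b \<in> phi ` edges_between E ends (Q ! i) (Q ! (i+1)) \<and> a \<noteq> b \<and> a \<noteq> c \<and> b \<noteq> c"
    using choose_c[OF Dtwo[rule_format, OF D1] Dtwo[rule_format, OF D2] diff] by blast
  obtain e0 where e0: "e0 \<in> edges_between E ends (Q ! (i+1)) (Q ! (i+2))" "phi e0 = c" using c by blast
  show ?thesis
  proof (rule pc_from_cycle[OF dQ' sQ' lQ' _ two])
    show "n \<ge> 2" using n3 by simp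
    show "e0 \<in> edges_between E ends (Q' ! (n-1)) (Q' ! 0)" using e0 q2 q3 by simp
    show "\<exists>a b. a \<in> phi ` edges_between E ends (Q' ! (n-2)) (Q' ! (n-1)) \<and>
                 b \<in> phi ` edges_between E ends (Q' ! (n-2)) (Q' ! (n-1)) \<and> a \<noteq> b \<and> a \<noteq> phi e0 \<and> b \<noteq> phi e0"
      using ab q1 q2 e0 by simp
  qed
qed


theorem mainTheorem11:
  fixes V :: "'a set" and E :: "'e set" and ends :: "'e \<Rightarrow> 'a set"
    and phi :: "'e \<Rightarrow> nat" and c :: nat
  assumes G: "colored_multigraph V E ends phi c"
    and two_colors: "\<forall>x\<in>V. \<exists>e\<in>E. \<exists>f\<in>E. x \<in> ends e \<and> x \<in> ends f \<and> phi e \<noteq> phi f"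
    and dym: "\<forall>x\<in>V. 2 * delta_dym V E ends phi x \<ge> card V + 1"
    and three_colors: "\<exists>x\<in>V. \<exists>e1\<in>E. \<exists>e2\<in>E. \<exists>e3\<in>E.
                          x \<in> ends e1 \<and> x \<in> ends e2 \<and> x \<in> ends e3 \<and>
                          phi e1 \<noteq> phi e2 \<and> phi e1 \<noteq> phi e3 \<and> phi e2 \<noteq> phi e3"
  shows "has_pc_hamiltonian_cycle V E ends phi"
proof -
  have fin: "finite V" and ends2: "\<forall>e\<in>E. ends e \<subseteq> V \<and> card (ends e) = 2"
    using G by (auto simp: colored_multigraph_def)
  define EB where "EB a b = edges_between E ends a b" for a b
  define L where "L a b = phi ` EB a b" for a b
  define D where "D a b \<longleftrightarrow> a \<in> V \<and> b \<in> V \<and> (\<exists>e\<in>EB a b. \<exists>f\<in>EB a b. phi e \<noteq> phi f)" for a b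
  have EBsym: "EB a b = EB b a" for a b unfolding EB_def edges_between_def by (auto simp: insert_commute)
  have Lsym: "L a b = L b a" for a b unfolding L_def using EBsym by simp
  have symD: "\<forall>a b. D a b \<longrightarrow> D b a" unfolding D_def using EBsym by metis
  have irr: "\<forall>a. \<not> D a a"
  proof (intro allI notI)
    fix a assume "D a a"
    then obtain e where e: "e \<in> EB a a" unfolding D_def by blast
    then have "e \<in> E" "ends e = {a}" unfolding EB_def edges_between_def by auto
    then show False using ends2 by auto
  qed
  have DV: "\<forall>a b. D a b \<longrightarrow> a \<in> V \<and> b \<in> V" unfolding D_def by blast
  have deg: "\<forall>x\<in>V. card V + 1 \<le> 2 * card {y. D x y}"
  proof
    fix x assume x: "x \<in> V"
    have "{y. D x y} = {y \<in> V. \<exists>e\<in>edges_between E ends x y. \<exists>f\<in>edges_between E ends x y. phi e \<noteq> phi f}"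
      unfolding D_def EB_def using x by auto
    then show "card V + 1 \<le> 2 * card {y. D x y}" using dym x unfolding delta_dym_def by simp
  qed
  have Dtwo: "\<forall>a b. D a b \<longrightarrow> (\<exists>x y. x \<in> phi ` edges_between E ends a b \<and> y \<in> phi ` edges_between E ends a b \<and> x \<noteq> y)"
    unfolding D_def EB_def by blast
  define n where "n = card V"
  obtain x0 where x0: "x0 \<in> V" using three_colors by blast
  have n3: "n \<ge> 3"
  proof -
    have "{y. D x0 y} \<subseteq> V - {x0}" using DV irr by auto
    then have "card {y. D x0 y} \<le> card (V - {x0})" using fin by (intro card_mono) auto
    also have "\<dots> = n - 1" using x0 fin n_def by simp
    finally show ?thesis using deg x0 n_def by fastforce
  qed
  have HC: "\<And>u v. u \<in> V \<Longrightarrow> v \<in> V \<Longrightarrow> u \<noteq> v \<Longrightarrow> \<exists>P. dpath D P \<and> distinct P \<and> set P = V \<and> hd P = u \<and> last P = v"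
    using ham_connected[OF fin symD irr DV deg] by blast
  have lenV: "\<And>P. distinct P \<Longrightarrow> set P = V \<Longrightarrow> length P = n"
    using n_def distinct_card by metis
  show ?thesis
  proof (rule ccontr)
    assume nopc: "\<not> has_pc_hamiltonian_cycle V E ends phi"
    have H: "L (Q ! j) (Q ! (j+1)) = L (Q ! (j+1)) (Q ! (j+2))"
      if "cyc D Q" "distinct Q" "set Q = V" "j + 2 < length Q" for Q j
    proof (rule ccontr)
      assume "L (Q ! j) (Q ! (j+1)) \<noteq> L (Q ! (j+1)) (Q ! (j+2))"
      then have "has_pc_hamiltonian_cycle V E ends phi"
        using triple_pc[OF that(1,2,3) refl _ Dtwo that(4)] n3 lenV that unfolding L_def EB_def by simp
      then show False using nopc by simp
    qed
    have "card {y. D x0 y} > 0" using deg x0 by fastforce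
    then obtain y0 where y0: "D x0 y0" by (metis card.empty less_irrefl empty_Collect_eq)
    obtain P0 where P0: "dpath D P0" "distinct P0" "set P0 = V" "hd P0 = x0" "last P0 = y0"
      using HC[OF x0] y0 DV irr by metis
    have lP0: "length P0 = n" using P0 lenV by simp
    have P0ne: "P0 \<noteq> []" using lP0 n3 by auto
    have cP0: "cyc D P0" unfolding cyc_def using P0 P0ne y0 symD by auto
    define S where "S = L (P0 ! 0) (P0 ! 1)"
    have allS: "\<And>i. Suc i < n \<Longrightarrow> L (P0 ! i) (P0 ! Suc i) = S"
    proof -
      fix i show "Suc i < n \<Longrightarrow> L (P0 ! i) (P0 ! Suc i) = S"
      proof (induction i)
        case 0 then show ?case using S_def by simp
      next
        case (Suc i)
        have "L (P0 ! i) (P0 ! (i+1)) = L (P0 ! (i+1)) (P0 ! (i+2))"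
          using H[OF cP0 P0(2,3)] Suc.prems lP0 by simp
        then show ?case using Suc by (simp add: numeral_2_eq_2)
      qed
    qed
    have closeS: "L (P0 ! (n-1)) (P0 ! 0) = S"
    proof -
      define P1 where "P1 = rotate 1 P0"
      have cP1: "cyc D P1" unfolding P1_def using cP0 by (rule cyc_rotate)
      have dP1: "distinct P1" "set P1 = V" "length P1 = n" unfolding P1_def using P0 lP0 by auto
      have nth1: "P1 ! j = P0 ! ((1 + j) mod n)" if "j < n" for j
        unfolding P1_def using nth_rotate[of j P0 1] that lP0 by simp
      have h0: "L (P1 ! (n-3)) (P1 ! (n-3+1)) = L (P1 ! (n-3+1)) (P1 ! (n-3+2))"
        using H[OF cP1 dP1(1,2)] dP1(3) n3 by simp
      have e1: "n - 3 + 1 = n - 2" and e2: "n - 3 + 2 = n - 1" using n3 by auto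
      have "L (P1 ! (n-3)) (P1 ! (n-2)) = L (P1 ! (n-2)) (P1 ! (n-1))"
        using h0 by (simp only: e1 e2)
      moreover have "P1 ! (n-3) = P0 ! (n-2)"
      proof -
        have "(1 + (n-3)) mod n = n - 2" using n3 by simp
        then show ?thesis using nth1[of "n-3"] n3 by simp
      qed
      moreover have "P1 ! (n-2) = P0 ! (n-1)"
      proof -
        have "(1 + (n-2)) mod n = n - 1" using n3 by simp
        then show ?thesis using nth1[of "n-2"] n3 by simp
      qed
      moreover have "P1 ! (n-1) = P0 ! 0"
      proof -
        have "(1 + (n-1)) mod n = 0" using n3 by simp
        then show ?thesis using nth1[of "n-1"] n3 by simp
      qed
      moreover have "L (P0 ! (n-2)) (P0 ! Suc (n-2)) = S" using allS n3 by simp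
      moreover have "Suc (n-2) = n - 1" using n3 by simp
      ultimately show ?thesis by simp
    qed
    define Pr where "Pr a b \<longleftrightarrow> D a b \<and> L a b = S" for a b
    have symPr: "\<forall>a b. Pr a b = Pr b a" unfolding Pr_def using symD Lsym by metis
    have PrD: "\<forall>a b. Pr a b \<longrightarrow> D a b" unfolding Pr_def by blast
    have cPr: "cyc Pr P0"
    proof -
      have "dpath Pr P0"
        using P0(1) allS lP0 unfolding dpath_nth Pr_def by auto
      moreover have "Pr (last P0) (hd P0)"
      proof -
        have "last P0 = P0 ! (n-1)" using P0ne lP0 by (simp add: last_conv_nth)
        moreover have "hd P0 = P0 ! 0" using P0ne by (simp add: hd_conv_nth)
        ultimately show ?thesis using closeS cP0 unfolding Pr_def cyc_def by simp
      qed
      ultimately show ?thesis using P0ne unfolding cyc_def by simp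
    qed
    have AllS: "L s t = S" if st: "D s t" for s t
    proof (rule ccontr)
      assume ne: "L s t \<noteq> S"
      then have "\<not> Pr s t" unfolding Pr_def by simp
      from chord[OF fin symD irr DV deg PrD symPr cPr P0(2,3) st this]
      obtain Q2 j where Q2: "cyc D Q2" "distinct Q2" "set Q2 = V" "j + 2 < length Q2"
        "Pr (Q2 ! j) (Q2 ! (j+1)) \<noteq> Pr (Q2 ! (j+1)) (Q2 ! (j+2))" by blast
      have dp: "dpath D Q2" using Q2(1) by (simp add: cyc_def)
      have "D (Q2 ! j) (Q2 ! (j+1))" using dp Q2(4) unfolding dpath_nth by simp
      moreover have "D (Q2 ! (j+1)) (Q2 ! (j+2))"
      proof -
        have "Suc (j+1) < length Q2" using Q2(4) by simp
        then show ?thesis using dp unfolding dpath_nth by (simp add: numeral_2_eq_2)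
      qed
      ultimately have "L (Q2 ! j) (Q2 ! (j+1)) \<noteq> L (Q2 ! (j+1)) (Q2 ! (j+2))"
        using Q2(5) unfolding Pr_def by auto
      then show False using H[OF Q2(1,2,3,4)] by simp
    qed
    have lastP0: "P0 ! (n-1) = last P0" using P0ne lP0 by (simp add: last_conv_nth)
    have hdP0: "P0 ! 0 = hd P0" using P0ne by (simp add: hd_conv_nth)
    show False
    proof (cases "\<exists>x1 x2 x3. x1 \<in> S \<and> x2 \<in> S \<and> x3 \<in> S \<and> x1 \<noteq> x2 \<and> x1 \<noteq> x3 \<and> x2 \<noteq> x3")
      case True
      then obtain x1 x2 x3 where xs: "x1 \<in> S" "x2 \<in> S" "x3 \<in> S" "x1 \<noteq> x2" "x1 \<noteq> x3" "x2 \<noteq> x3" by blast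
      obtain e0 where e0: "e0 \<in> edges_between E ends (P0 ! (n-1)) (P0 ! 0)" "phi e0 = x1"
        using xs(1) closeS unfolding L_def EB_def by auto
      have two: "\<forall>i. Suc i < n \<longrightarrow> (\<exists>a b. a \<in> phi ` edges_between E ends (P0 ! i) (P0 ! Suc i) \<and>
                 b \<in> phi ` edges_between E ends (P0 ! i) (P0 ! Suc i) \<and> a \<noteq> b)"
        using P0(1) Dtwo lP0 by (auto simp: dpath_nth)
      have "L (P0 ! (n-2)) (P0 ! (n-1)) = S"
        using allS[of "n-2"] n3 by (simp add: Suc_diff_Suc numeral_2_eq_2)
      then have prev: "\<exists>a b. a \<in> phi ` edges_between E ends (P0 ! (n-2)) (P0 ! (n-1)) \<and>
                 b \<in> phi ` edges_between E ends (P0 ! (n-2)) (P0 ! (n-1)) \<and> a \<noteq> b \<and> a \<noteq> phi e0 \<and> b \<noteq> phi e0"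
        using xs e0(2) unfolding L_def EB_def by metis
      have "has_pc_hamiltonian_cycle V E ends phi"
        using pc_from_cycle[OF P0(2,3) lP0 _ two e0(1) prev] n3 by simp
      then show False using nopc by simp
    next
      case False
      obtain x e1 e2 e3 where x: "x \<in> V" "e1 \<in> E" "e2 \<in> E" "e3 \<in> E" "x \<in> ends e1" "x \<in> ends e2" "x \<in> ends e3"
        "phi e1 \<noteq> phi e2" "phi e1 \<noteq> phi e3" "phi e2 \<noteq> phi e3" using three_colors by blast
      have "\<exists>e\<in>E. x \<in> ends e \<and> phi e \<notin> S" using False x by metis
      then obtain e where e: "e \<in> E" "x \<in> ends e" "phi e \<notin> S" by blast
      have "card (ends e) = 2" "ends e \<subseteq> V" using ends2 e(1) by auto
      then obtain a b where ab: "ends e = {a, b}" "a \<noteq> b" by (meson card_2_iff)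
      obtain y where y: "ends e = {x, y}" "y \<noteq> x" using ab e(2) by (metis insert_commute insertE singletonD)
      have yV: "y \<in> V" using y \<open>ends e \<subseteq> V\<close> by auto
      obtain W where W: "dpath D W" "distinct W" "set W = V" "hd W = x" "last W = y"
        using HC[OF x(1) yV] y(2) by metis
      have lW: "length W = n" using W lenV by simp
      have Wne: "W \<noteq> []" using lW n3 by auto
      have lastW: "W ! (n-1) = y" using Wne lW W(5) by (simp add: last_conv_nth)
      have hdW: "W ! 0 = x" using Wne W(4) by (simp add: hd_conv_nth)
      have e0: "e \<in> edges_between E ends (W ! (n-1)) (W ! 0)"
        using e(1) y(1) lastW hdW unfolding edges_between_def by (auto simp: insert_commute)
      have two: "\<forall>i. Suc i < n \<longrightarrow> (\<exists>a b. a \<in> phi ` edges_between E ends (W ! i) (W ! Suc i) \<and>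
                 b \<in> phi ` edges_between E ends (W ! i) (W ! Suc i) \<and> a \<noteq> b)"
        using W(1) Dtwo lW by (auto simp: dpath_nth)
      have Dl: "D (W ! (n-2)) (W ! (n-1))"
      proof -
        have "Suc (n-2) < length W" "Suc (n-2) = n - 1" using lW n3 by auto
        then show ?thesis using W(1) unfolding dpath_nth by metis
      qed
      then have LS: "L (W ! (n-2)) (W ! (n-1)) = S" using AllS by blast
      obtain a' b' where a'b': "a' \<in> L (W ! (n-2)) (W ! (n-1))" "b' \<in> L (W ! (n-2)) (W ! (n-1))" "a' \<noteq> b'"
        using Dtwo Dl unfolding L_def EB_def by blast
      have prev: "\<exists>a b. a \<in> phi ` edges_between E ends (W ! (n-2)) (W ! (n-1)) \<and>
                 b \<in> phi ` edges_between E ends (W ! (n-2)) (W ! (n-1)) \<and> a \<noteq> b \<and> a \<noteq> phi e \<and> b \<noteq> phi e"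
        using a'b' LS e(3) unfolding L_def EB_def by metis
      have "has_pc_hamiltonian_cycle V E ends phi"
        using pc_from_cycle[OF W(2,3) lW _ two e0 prev] n3 by simp
      then show False using nopc by simp
    qed
  qed
qed

end
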